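(* Let $\tilde n$ be a set of names and $\mathtt{s}\in\tilde n$. Let $M$ be a ground term public with respect to $\tilde n$, and let $U,V$ be terms such that for every occurrence $q_{\mathtt{s}}$ of $\mathtt{s}$ in $U$ (respectively in $V$) there is an encryption occurrence $q_{\mathsf{enc}}$ in $U$ (respectively in $V$) with $q_{\mathsf{enc}}\cdot1\le q_{\mathtt{s}}$ which is an agent encryption with respect to $\tilde n\setminus\{\mathtt{s}\}$ and a probabilistic encryption with respect to $\{U,V\}$. Then $U[\mathtt{s}/M]=V[\mathtt{s}/M]$ (syntactic equality) implies $U=V$.
   Context: Terms are built over function symbols including $\mathsf{enc}$ and $\mathsf{enca}$ (arity 3) and $\mathsf{priv}$, constants, names and variables. A term is public w.r.t. a set of names $\tilde n$ if it contains no name of $\tilde n$ and no symbol $\mathsf{priv}$. Positions are sequences of positive integers ordered by prefix $\le$; $T|_p$ is the subterm at $p$; $T[\mathtt{s}/M]$ replaces every occurrence of the name $\mathtt{s}$ by $M$. An encryption occurrence in $U$ is a position $q$ where the head of $U|_q$ is $\mathsf{enc}$ or $\mathsf{enca}$; it is an agent encryption w.r.t. a set of names $\tilde m$ if $U|_{q\cdot3}\in\tilde m$; it is a probabilistic encryption w.r.t. a set of terms $S$ if for all $W\in S$ and positions $p$ with $W|_p=U|_{q\cdot3}$ we have $p=q'\cdot3$ for some $q'$ with $W|_{q'}=U|_q$. *)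

theory Defs
  imports Main "HOL-Library.Sublist"
begin

datatype 'f sym = Enc | Enca | Priv | F 'f

datatype ('f, 'c, 'n, 'v) trm =
    Var 'v | Nm 'n | Cst 'c | Fun "'f sym" "('f, 'c, 'n, 'v) trm list"

fun sym_arity :: "('f \<Rightarrow> nat) \<Rightarrow> 'f sym \<Rightarrow> nat" where
  "sym_arity ar Enc = 3"
| "sym_arity ar Enca = 3"
| "sym_arity ar Priv = 1"
| "sym_arity ar (F f) = ar f"

fun wf_trm :: "('f \<Rightarrow> nat) \<Rightarrow> ('f, 'c, 'n, 'v) trm \<Rightarrow> bool" where
  "wf_trm ar (Fun g ts) = (length ts = sym_arity ar g \<and> (\<forall>t\<in>set ts. wf_trm ar t))"
| "wf_trm ar _ = True"

fun vars_of :: "('f, 'c, 'n, 'v) trm \<Rightarrow> 'v set" where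
  "vars_of (Var x) = {x}"
| "vars_of (Fun g ts) = (\<Union>t\<in>set ts. vars_of t)"
| "vars_of _ = {}"

fun names_of :: "('f, 'c, 'n, 'v) trm \<Rightarrow> 'n set" where
  "names_of (Nm a) = {a}"
| "names_of (Fun g ts) = (\<Union>t\<in>set ts. names_of t)"
| "names_of _ = {}"

fun syms_of :: "('f, 'c, 'n, 'v) trm \<Rightarrow> 'f sym set" where
  "syms_of (Fun g ts) = insert g (\<Union>t\<in>set ts. syms_of t)"
| "syms_of _ = {}"

definition ground :: "('f, 'c, 'n, 'v) trm \<Rightarrow> bool" where
  "ground T \<longleftrightarrow> vars_of T = {}"

definition public :: "'n set \<Rightarrow> ('f, 'c, 'n, 'v) trm \<Rightarrow> bool" where
  "public N T \<longleftrightarrow> names_of T \<inter> N = {} \<and> Priv \<notin> syms_of T"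

text \<open>Positions are lists of positive integers (arguments indexed from 1);
  subterm at a position (None if the position does not exist).\<close>
fun subt :: "('f, 'c, 'n, 'v) trm \<Rightarrow> nat list \<Rightarrow> ('f, 'c, 'n, 'v) trm option" where
  "subt T [] = Some T"
| "subt (Fun g ts) (i # p) = (if 1 \<le> i \<and> i \<le> length ts then subt (ts ! (i - 1)) p else None)"
| "subt _ (_ # _) = None"

fun repl :: "'n \<Rightarrow> ('f, 'c, 'n, 'v) trm \<Rightarrow> ('f, 'c, 'n, 'v) trm \<Rightarrow> ('f, 'c, 'n, 'v) trm" where
  "repl s M (Nm a) = (if a = s then M else Nm a)"
| "repl s M (Fun g ts) = Fun g (map (repl s M) ts)"
| "repl s M T = T"

definition enc_occ :: "('f, 'c, 'n, 'v) trm \<Rightarrow> nat list \<Rightarrow> bool" where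
  "enc_occ U q \<longleftrightarrow> (\<exists>g ts. subt U q = Some (Fun g ts) \<and> (g = Enc \<or> g = Enca))"

definition agent_enc :: "('f, 'c, 'n, 'v) trm \<Rightarrow> nat list \<Rightarrow> 'n set \<Rightarrow> bool" where
  "agent_enc U q N \<longleftrightarrow> (\<exists>k. subt U (q @ [3]) = Some (Nm k) \<and> k \<in> N)"

definition prob_enc :: "('f, 'c, 'n, 'v) trm \<Rightarrow> nat list \<Rightarrow> ('f, 'c, 'n, 'v) trm set \<Rightarrow> bool" where
  "prob_enc U q S \<longleftrightarrow>
     (\<forall>W\<in>S. \<forall>p. subt W p = subt U (q @ [3]) \<longrightarrow>
        (\<exists>q'. p = q' @ [3] \<and> subt W q' = subt U q))"

end

theory Submission
  imports Defs
begin

lemma subt_append: "subt T (a @ b) = (case subt T a of None \<Rightarrow> None | Some t \<Rightarrow> subt t b)"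
proof (induction a arbitrary: T)
  case Nil then show ?case by simp
next
  case (Cons i a) then show ?case by (cases T) auto
qed

lemma subt_repl: "subt T q = Some t \<Longrightarrow> subt (repl s M T) q = Some (repl s M t)"
proof (induction q arbitrary: T)
  case Nil then show ?case by simp
next
  case (Cons i q) then show ?case by (cases T) (auto split: if_splits)
qed

lemma subt_repl_inv: "subt (repl s M V) q = Some t \<Longrightarrow>
   (\<exists>t'. subt V q = Some t' \<and> t = repl s M t') \<or>
   (\<exists>q1 q2. q = q1 @ q2 \<and> subt V q1 = Some (Nm s) \<and> subt M q2 = Some t)"
proof (induction q arbitrary: V)
  case Nil then show ?case by simp
next
  case (Cons i q)
  show ?case
  proof (cases V)
    case (Nm a)
    show ?thesis
    proof (cases "a = s")
      case True
      then have "subt M (i#q) = Some t" using Cons.prems Nm by simp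
      then show ?thesis using Nm True by (intro disjI2 exI[of _ "[]"] exI[of _ "i#q"]) auto
    next
      case False then show ?thesis using Cons.prems Nm by simp
    qed
  next
    case (Fun g ts)
    have i: "1 \<le> i \<and> i \<le> length ts" and st: "subt (repl s M (ts ! (i-1))) q = Some t"
      using Cons.prems Fun by (auto split: if_splits)
    from Cons.IH[OF st] show ?thesis
    proof
      assume "\<exists>t'. subt (ts ! (i - 1)) q = Some t' \<and> t = repl s M t'"
      then show ?thesis using i Fun by auto
    next
      assume "\<exists>q1 q2. q = q1 @ q2 \<and> subt (ts ! (i - 1)) q1 = Some (Nm s) \<and> subt M q2 = Some t"
      then obtain q1 q2 where "q = q1 @ q2" "subt (ts ! (i - 1)) q1 = Some (Nm s)" "subt M q2 = Some t" by blast
      then show ?thesis using i Fun by (intro disjI2 exI[of _ "i#q1"] exI[of _ q2]) auto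
    qed
  qed (use Cons.prems in auto)
qed

lemma names_subt: "subt M q = Some (Nm k) \<Longrightarrow> k \<in> names_of M"
proof (induction q arbitrary: M)
  case Nil then show ?case by simp
next
  case (Cons i q)
  show ?case
  proof (cases M)
    case (Fun g ts)
    have i: "i - 1 < length ts" "subt (ts ! (i-1)) q = Some (Nm k)"
      using Cons.prems Fun by (auto split: if_splits)
    then show ?thesis using Cons.IH[OF i(2)] Fun nth_mem[OF i(1)] by auto
  qed (use Cons.prems in auto)
qed

lemma key:
  assumes sN: "s \<in> N" and pub: "public N M"
    and hyp: "\<forall>qs. subt U qs = Some (Nm s) \<longrightarrow>
           (\<exists>qe. enc_occ U qe \<and> prefix (qe @ [1]) qs \<and>
                 agent_enc U qe (N - {s}) \<and> prob_enc U qe S)"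
    and VS: "V \<in> S"
    and eq: "repl s M U = repl s M V"
    and p: "subt U p = Some (Nm s)"
  shows "subt V p = Some (Nm s)"
proof -
  obtain qe where pre: "prefix (qe @ [1]) p" and ag: "agent_enc U qe (N - {s})"
    and pr: "prob_enc U qe S" using hyp p by blast
  obtain k where k: "subt U (qe @ [3]) = Some (Nm k)" "k \<in> N" "k \<noteq> s"
    using ag unfolding agent_enc_def by auto
  have nk: "k \<notin> names_of M" using pub k(2) unfolding public_def by auto
  have "subt (repl s M V) (qe @ [3]) = Some (Nm k)"
    using subt_repl[OF k(1), of s M] k(3) eq by simp
  from subt_repl_inv[OF this] have V3: "subt V (qe @ [3]) = Some (Nm k)"
  proof
    assume "\<exists>t'. subt V (qe @ [3]) = Some t' \<and> Nm k = repl s M t'"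
    then obtain t' where t': "subt V (qe @ [3]) = Some t'" "Nm k = repl s M t'" by blast
    show ?thesis
    proof (cases t')
      case (Nm a)
      then show ?thesis using t' nk by (auto split: if_splits)
    qed (use t' in auto)
  next
    assume "\<exists>q1 q2. qe @ [3] = q1 @ q2 \<and> subt V q1 = Some (Nm s) \<and> subt M q2 = Some (Nm k)"
    then show ?thesis using names_subt[of M _ k] nk by blast
  qed
  then obtain q' where "qe @ [3] = q' @ [3]" "subt V q' = subt U qe"
    using pr VS k(1) unfolding prob_enc_def by metis
  then have Vq: "subt V qe = subt U qe" by simp
  obtain r where r: "p = qe @ [1] @ r" using pre unfolding prefix_def by auto
  show ?thesis using p Vq unfolding r subt_append[of _ qe] by (cases "subt U qe") auto
qed

theorem lemma2p13:
  fixes ar :: "'f \<Rightarrow> nat"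
    and N :: "'n set" and s :: 'n
    and M U V :: "('f, 'c, 'n, 'v) trm"
  assumes "s \<in> N"
    and "wf_trm ar M" "wf_trm ar U" "wf_trm ar V"
    and "ground M" and "public N M"
    and "\<forall>qs. subt U qs = Some (Nm s) \<longrightarrow>
           (\<exists>qe. enc_occ U qe \<and> prefix (qe @ [1]) qs \<and>
                 agent_enc U qe (N - {s}) \<and> prob_enc U qe {U, V})"
    and "\<forall>qs. subt V qs = Some (Nm s) \<longrightarrow>
           (\<exists>qe. enc_occ V qe \<and> prefix (qe @ [1]) qs \<and>
                 agent_enc V qe (N - {s}) \<and> prob_enc V qe {U, V})"
  shows "repl s M U = repl s M V \<longrightarrow> U = V"
proof
  assume eq: "repl s M U = repl s M V"
  have kU: "subt U p = Some (Nm s) \<Longrightarrow> subt V p = Some (Nm s)" for p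
    using key[OF assms(1) assms(6) assms(7) _ eq] by blast
  have kV: "subt V p = Some (Nm s) \<Longrightarrow> subt U p = Some (Nm s)" for p
    using key[OF assms(1) assms(6) assms(8) _ eq[symmetric]] by blast
  have gM: "vars_of M = {}" using assms(5) unfolding ground_def .
  have pubM: "names_of M \<inter> N = {}" using assms(6) unfolding public_def by auto
  have main: "\<And>p v. subt U p = Some u \<Longrightarrow> subt V p = Some v \<Longrightarrow> repl s M u = repl s M v \<Longrightarrow> u = v" for u
  proof (induction u)
    case (Fun g ts)
    show ?case
    proof (cases "v = Nm s")
      case True then show ?thesis using kV Fun.prems by fastforce
    next
      case False
      show ?thesis
      proof (cases v)
        case (Fun g' ts')
        have gg: "g' = g" and mm: "map (repl s M) ts = map (repl s M) ts'"
          using Fun.prems(3) Fun by auto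
        have len: "length ts' = length ts" using mm by (metis length_map)
        have "ts ! j = ts' ! j" if j: "j < length ts" for j
        proof -
          have a: "subt U (p @ [Suc j]) = Some (ts ! j)"
            using Fun.prems(1) j by (simp add: subt_append)
          have b: "subt V (p @ [Suc j]) = Some (ts' ! j)"
            using Fun.prems(2) \<open>v = _\<close> j len by (simp add: subt_append)
          have c: "repl s M (ts ! j) = repl s M (ts' ! j)"
            using mm j len by (metis nth_map)
          show ?thesis using Fun.IH[OF nth_mem[OF j] a b c] .
        qed
        then have "ts = ts'" using len by (simp add: list_eq_iff_nth_eq)
        then show ?thesis using Fun gg by simp
      qed (use Fun.prems(3) False in auto)
    qed
  next
    case (Nm a)
    show ?case
    proof (cases "a = s")
      case True then show ?thesis using kU Nm.prems by fastforce
    next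
      case False
      show ?thesis
      proof (cases "v = Nm s")
        case True then show ?thesis using kV Nm.prems by fastforce
      next
        case False
        then show ?thesis using Nm.prems(3) \<open>a \<noteq> s\<close> by (cases v) (auto split: if_splits)
      qed
    qed
  next
    case (Var x)
    show ?case
    proof (cases "v = Nm s")
      case True then show ?thesis using kV Var.prems by fastforce
    next
      case False
      then show ?thesis using Var.prems(3) by (cases v) (auto split: if_splits)
    qed
  next
    case (Cst c)
    show ?case
    proof (cases "v = Nm s")
      case True then show ?thesis using kV Cst.prems by fastforce
    next
      case False
      then show ?thesis using Cst.prems(3) by (cases v) (auto split: if_splits)
    qed
  qed
  show "U = V" using main[of "[]" U V] eq by simp
qed

end
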